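(* Let $f\colon\mathbb{R}^d\to\mathbb{R}\cup\{\infty\}$ be a lower semicontinuous convex function, let $Q\subseteq\mathbb{R}^d$ be a nonempty closed convex set contained in the domain of $f$, and assume the set $X^*$ of minimizers of $f$ over $Q$ is nonempty, with minimum value $f^*$. Suppose $f$ is $\mu$-strongly convex on $Q$ for some $\mu>0$. Let $g(x;\xi)$ be a stochastic subgradient oracle with $\mathbb{E}_{\xi\sim D}\,g(x;\xi)\in\partial f(x)$ for all $x\in Q$, and suppose there are constants $L_0,L_1\ge0$ with $$\mathbb{E}_{\xi}\|g(x;\xi)\|^2\le L_0^2+L_1(f(x)-f^* )\qquad\text{for all }x\in Q.$$ Fix $x^*\in X^*$, $x_0\in Q$, and consider $x_{k+1}=P_Q(x_k-\alpha_kg(x_k;\xi_k))$ with $\xi_k\sim D$ i.i.d. and $$\alpha_k=\frac{2}{\mu(k+2)+\frac{L_1^2}{\mu(k+1)}}.$$ Then for every $T\ge0$, $$\mathbb{E}_{\xi_{0\dots T}}\left[f\left(\frac{\sum_{k=0}^T(k+1)(2-L_1\alpha_k)x_k}{\sum_{k=0}^T(k+1)(2-L_1\alpha_k)}\right)-f^*\right]\le\frac{2L_0^2(T+1)+L_1^2\|x_0-x^*\|^2/2}{\mu\sum_{k=0}^T(k+1)(2-L_1\alpha_k)},$$ and also $$\mathbb{E}_{\xi_{0\dots T}}\left[f\left(\frac{2}{(T+1)(T+2)}\sum_{k=0}^T(k+1)x_k\right)-f^*\right]\le\frac{4L_0^2}{\mu(T+2)}+\frac{L_1^2\|x_0-x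^*\|^2}{\mu(T+1)(T+2)}.$$
   Context: $f$ is $\mu$-strongly convex on $Q$ if for every $x\in Q$ and $g\in\partial f(x)$, $f(y)\ge f(x)+g^T(y-x)+\frac{\mu}{2}\|y-x\|^2$ for all $y\in Q$. $P_Q$ is orthogonal projection onto $Q$; $\partial f(x)=\{g: f(y)\ge f(x)+g^T(y-x)\ \forall y\in\mathbb{R}^d\}$; $\mathbb{E}_{\xi_{0\dots T}}$ is expectation over the i.i.d. samples $\xi_0,\dots,\xi_T$. *)

theory Defs
  imports "HOL-Analysis.Analysis" "HOL-Probability.Probability"
begin

definition lsc_fun :: "('a::topological_space \<Rightarrow> ereal) \<Rightarrow> bool" where
  "lsc_fun f \<longleftrightarrow> (\<forall>x c. c < f x \<longrightarrow> (\<forall>\<^sub>F y in at x. c < f y))"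

definition convex_fun :: "('a::real_vector \<Rightarrow> ereal) \<Rightarrow> bool" where
  "convex_fun f \<longleftrightarrow> (\<forall>x y t. 0 \<le> t \<and> t \<le> 1 \<longrightarrow>
      f ((1 - t) *\<^sub>R x + t *\<^sub>R y) \<le> ereal (1 - t) * f x + ereal t * f y)"

definition subdiff :: "('a::real_inner \<Rightarrow> ereal) \<Rightarrow> 'a \<Rightarrow> 'a set" where
  "subdiff f x = {g. \<forall>y. f y \<ge> f x + ereal (g \<bullet> (y - x))}"

definition strongly_convex_on :: "real \<Rightarrow> 'a::real_inner set \<Rightarrow> ('a \<Rightarrow> ereal) \<Rightarrow> bool" where
  "strongly_convex_on \<mu> Q f \<longleftrightarrow> (\<forall>x\<in>Q. \<forall>g\<in>subdiff f x. \<forall>y\<in>Q.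
      f y \<ge> f x + ereal (g \<bullet> (y - x) + \<mu> / 2 * (norm (y - x))\<^sup>2))"

definition step_size :: "real \<Rightarrow> real \<Rightarrow> nat \<Rightarrow> real" where
  "step_size \<mu> L1 k = 2 / (\<mu> * (real k + 2) + L1\<^sup>2 / (\<mu> * (real k + 1)))"

primrec psg_iter :: "'a::euclidean_space set \<Rightarrow> ('a \<Rightarrow> 'b \<Rightarrow> 'a) \<Rightarrow> (nat \<Rightarrow> real)
    \<Rightarrow> 'a \<Rightarrow> (nat \<Rightarrow> 'b) \<Rightarrow> nat \<Rightarrow> 'a" where
  "psg_iter Q g \<alpha> x0 \<omega> 0 = x0"
| "psg_iter Q g \<alpha> x0 \<omega> (Suc k) =
     closest_point Q (psg_iter Q g \<alpha> x0 \<omega> k - \<alpha> k *\<^sub>R g (psg_iter Q g \<alpha> x0 \<omega> k) (\<omega> k))"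

end

theory Submission
  imports Defs
begin

lemma lsc_measurable:
  fixes f :: "'a::euclidean_space \<Rightarrow> ereal"
  assumes "lsc_fun f" shows "f \<in> borel_measurable borel"
proof (rule borel_measurableI_greater)
  fix c
  have "open {x. c < f x}"
  proof (subst open_subopen, intro ballI)
    fix x assume "x \<in> {x. c < f x}"
    then have "c < f x" by simp
    with assms have "\<forall>\<^sub>F y in at x. c < f y" unfolding lsc_fun_def by blast
    with \<open>c < f x\<close> have "\<forall>\<^sub>F y in nhds x. c < f y" by (simp add: eventually_nhds_conv_at)
    then obtain S where "open S" "x \<in> S" "\<forall>y\<in>S. c < f y" unfolding eventually_nhds by blast
    then show "\<exists>T. open T \<and> x \<in> T \<and> T \<subseteq> {x. c < f x}" by blast
  qed
  then show "{x \<in> space borel. c < f x} \<in> sets borel" by simp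
qed

lemma iter_dep:
  assumes "\<And>j. j < k \<Longrightarrow> \<omega> j = \<omega>' j"
  shows "psg_iter Q g \<alpha> x0 \<omega> k = psg_iter Q g \<alpha> x0 \<omega>' k"
  using assms by (induction k) auto

lemma iter_upd:
  assumes "k \<le> m"
  shows "psg_iter Q g \<alpha> x0 (fun_upd \<omega> m y) k = psg_iter Q g \<alpha> x0 \<omega> k"
  using assms by (intro iter_dep) auto

lemma iter_in_Q:
  assumes "convex Q" "closed Q" "Q \<noteq> {}" "x0 \<in> Q"
  shows "psg_iter Q g \<alpha> x0 \<omega> k \<in> Q"
  using assms by (induction k) (auto intro: closest_point_in_set)

lemma iter_meas:
  fixes Q :: "'a::euclidean_space set" and D :: "'b measure"
  assumes "convex Q" "closed Q" "Q \<noteq> {}"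
    and g_meas: "(\<lambda>(x, \<xi>). g x \<xi>) \<in> borel_measurable (borel \<Otimes>\<^sub>M D)"
  shows "k \<le> Suc T \<Longrightarrow> (\<lambda>\<omega>. psg_iter Q g \<alpha> x0 \<omega> k) \<in> borel_measurable (PiM {..T} (\<lambda>_. D))"
proof (induction k)
  case 0 then show ?case by simp
next
  case (Suc k)
  then have IH: "(\<lambda>\<omega>. psg_iter Q g \<alpha> x0 \<omega> k) \<in> borel_measurable (PiM {..T} (\<lambda>_. D))" by simp
  have "(\<lambda>\<omega>. (psg_iter Q g \<alpha> x0 \<omega> k, \<omega> k)) \<in> measurable (PiM {..T} (\<lambda>_. D)) (borel \<Otimes>\<^sub>M D)"
    using Suc.prems by (intro measurable_Pair IH) (auto intro: measurable_component_singleton)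
  from measurable_comp[OF this g_meas]
  have G: "(\<lambda>\<omega>. g (psg_iter Q g \<alpha> x0 \<omega> k) (\<omega> k)) \<in> borel_measurable (PiM {..T} (\<lambda>_. D))"
    by (simp add: comp_def)
  have C: "closest_point Q \<in> borel_measurable borel"
    using continuous_on_closest_point[OF assms(1-3)] by (rule borel_measurable_continuous_onI)
  have "(\<lambda>\<omega>. psg_iter Q g \<alpha> x0 \<omega> k - \<alpha> k *\<^sub>R g (psg_iter Q g \<alpha> x0 \<omega> k) (\<omega> k)) \<in> borel_measurable (PiM {..T} (\<lambda>_. D))"
    using IH G by measurable
  from measurable_comp[OF this C] show ?case by (simp add: comp_def)
qed



lemma one_step:
  fixes f :: "'a::euclidean_space \<Rightarrow> ereal" and D :: "'b measure" and g :: "'a \<Rightarrow> 'b \<Rightarrow> 'a"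
  assumes D: "prob_space D" and xQ: "x \<in> Q" and sQ: "xstar \<in> Q"
    and Q: "convex Q" "closed Q" "Q \<noteq> {}"
    and fx: "f x = ereal fx" and fs: "f xstar = ereal fstar"
    and strong: "strongly_convex_on \<mu> Q f"
    and gi: "integrable D (g x)"
    and G: "(\<integral>\<xi>. g x \<xi> \<partial>D) \<in> subdiff f x"
    and mom: "(\<integral>\<^sup>+\<xi>. ennreal ((norm (g x \<xi>))\<^sup>2) \<partial>D) \<le> ennreal (L0\<^sup>2 + L1 * (fx - fstar))"
    and a: "a \<ge> 0" and fge: "fx \<ge> fstar" and L1: "L1 \<ge> 0"
  shows "(\<integral>\<^sup>+\<xi>. ennreal ((norm (closest_point Q (x - a *\<^sub>R g x \<xi>) - xstar))\<^sup>2) \<partial>D)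
     \<le> ennreal ((1 - \<mu> * a) * (norm (x - xstar))\<^sup>2 + a\<^sup>2 * L0\<^sup>2 - a * (2 - L1 * a) * (fx - fstar))
    \<and> 0 \<le> (1 - \<mu> * a) * (norm (x - xstar))\<^sup>2 + a\<^sup>2 * L0\<^sup>2 - a * (2 - L1 * a) * (fx - fstar)"
proof -
  interpret D: prob_space D by fact
  define Gv where "Gv = (\<integral>\<xi>. g x \<xi> \<partial>D)"
  define v where "v = x - xstar"
  have gm: "g x \<in> borel_measurable D" using gi by (rule borel_measurable_integrable)
  have nm: "(\<lambda>\<xi>. (norm (g x \<xi>))\<^sup>2) \<in> borel_measurable D" using gm by measurable
  have fin: "(\<integral>\<^sup>+\<xi>. ennreal ((norm (g x \<xi>))\<^sup>2) \<partial>D) < \<infinity>"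
    using mom by (simp add: le_less_trans)
  have ni: "integrable D (\<lambda>\<xi>. (norm (g x \<xi>))\<^sup>2)"
    by (rule integrableI_bounded[OF nm]) (use fin in simp)
  define N2 where "N2 = (\<integral>\<xi>. (norm (g x \<xi>))\<^sup>2 \<partial>D)"
  have "ennreal N2 = (\<integral>\<^sup>+\<xi>. ennreal ((norm (g x \<xi>))\<^sup>2) \<partial>D)"
    unfolding N2_def by (rule nn_integral_eq_integral[symmetric]) (use ni in auto)
  with mom have "ennreal N2 \<le> ennreal (L0\<^sup>2 + L1 * (fx - fstar))" by simp
  then have N2le: "N2 \<le> L0\<^sup>2 + L1 * (fx - fstar)"
    using fge L1 by (subst (asm) ennreal_le_iff) auto
  have "f xstar \<ge> f x + ereal (Gv \<bullet> (xstar - x) + \<mu> / 2 * (norm (xstar - x))\<^sup>2)"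
    using strong xQ sQ G unfolding strongly_convex_on_def Gv_def by blast
  then have sc: "fstar \<ge> fx + Gv \<bullet> (xstar - x) + \<mu> / 2 * (norm v)\<^sup>2"
    using fx fs by (simp add: v_def norm_minus_commute)
  have vG: "v \<bullet> Gv \<ge> (fx - fstar) + \<mu> / 2 * (norm v)\<^sup>2"
  proof -
    have "Gv \<bullet> (xstar - x) = - (v \<bullet> Gv)" by (simp add: v_def inner_diff inner_commute)
    then show ?thesis using sc by linarith
  qed
  define \<psi> where "\<psi> \<xi> = (norm v)\<^sup>2 - 2 * a * (v \<bullet> g x \<xi>) + a\<^sup>2 * (norm (g x \<xi>))\<^sup>2" for \<xi>
  have pw: "(norm (closest_point Q (x - a *\<^sub>R g x \<xi>) - xstar))\<^sup>2 \<le> \<psi> \<xi>" for \<xi>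
  proof -
    have "norm (closest_point Q (x - a *\<^sub>R g x \<xi>) - xstar) \<le> norm (x - a *\<^sub>R g x \<xi> - xstar)"
      using closest_point_lipschitz[OF Q, of "x - a *\<^sub>R g x \<xi>" xstar] closest_point_self[OF sQ]
      by (simp add: dist_norm)
    then have "(norm (closest_point Q (x - a *\<^sub>R g x \<xi>) - xstar))\<^sup>2 \<le> (norm (v - a *\<^sub>R g x \<xi>))\<^sup>2"
      by (simp add: v_def power_mono algebra_simps)
    also have "\<dots> = \<psi> \<xi>"
      unfolding \<psi>_def power2_norm_eq_inner
      by (simp add: inner_diff inner_commute power2_eq_square algebra_simps)
    finally show ?thesis .
  qed
  have \<psi>i: "integrable D \<psi>"
    unfolding \<psi>_def using gi ni by (intro Bochner_Integration.integrable_diff Bochner_Integration.integrable_add integrable_mult_right integrable_inner_right) auto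
  have \<psi>int: "(\<integral>\<xi>. \<psi> \<xi> \<partial>D) = (norm v)\<^sup>2 - 2 * a * (v \<bullet> Gv) + a\<^sup>2 * N2"
    unfolding \<psi>_def Gv_def N2_def using gi ni
    by (simp add: Bochner_Integration.integral_diff Bochner_Integration.integral_add integrable_inner_right integral_inner_right D.prob_space)
  have \<psi>pos: "\<psi> \<xi> \<ge> 0" for \<xi> using pw[of \<xi>] by (meson order_trans zero_le_power2)
  have psiR: "(\<integral>\<xi>. \<psi> \<xi> \<partial>D) \<le> (1 - \<mu> * a) * (norm (x - xstar))\<^sup>2 + a\<^sup>2 * L0\<^sup>2 - a * (2 - L1 * a) * (fx - fstar)"
  proof -
    have "2 * a * (v \<bullet> Gv) \<ge> 2 * a * ((fx - fstar) + \<mu> / 2 * (norm v)\<^sup>2)"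
      using vG a by (intro mult_left_mono) auto
    moreover have "a\<^sup>2 * N2 \<le> a\<^sup>2 * (L0\<^sup>2 + L1 * (fx - fstar))"
      using N2le by (intro mult_left_mono) auto
    ultimately show ?thesis
      unfolding \<psi>int v_def by (simp add: algebra_simps power2_eq_square)
  qed
  have "(\<integral>\<^sup>+\<xi>. ennreal ((norm (closest_point Q (x - a *\<^sub>R g x \<xi>) - xstar))\<^sup>2) \<partial>D)
      \<le> (\<integral>\<^sup>+\<xi>. ennreal (\<psi> \<xi>) \<partial>D)"
    by (intro nn_integral_mono ennreal_leI pw)
  also have "\<dots> = ennreal (\<integral>\<xi>. \<psi> \<xi> \<partial>D)"
    by (rule nn_integral_eq_integral[OF \<psi>i]) (use \<psi>pos in auto)
  also have "\<dots> \<le> ennreal ((1 - \<mu> * a) * (norm (x - xstar))\<^sup>2 + a\<^sup>2 * L0\<^sup>2 - a * (2 - L1 * a) * (fx - fstar))"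
    using psiR by (rule ennreal_leI)
  finally have H: "(\<integral>\<^sup>+\<xi>. ennreal ((norm (closest_point Q (x - a *\<^sub>R g x \<xi>) - xstar))\<^sup>2) \<partial>D)
     \<le> ennreal ((1 - \<mu> * a) * (norm (x - xstar))\<^sup>2 + a\<^sup>2 * L0\<^sup>2 - a * (2 - L1 * a) * (fx - fstar))" .
  have "0 \<le> (\<integral>\<xi>. \<psi> \<xi> \<partial>D)" by (rule Bochner_Integration.integral_nonneg) (use \<psi>pos in auto)
  with H psiR show ?thesis by linarith
qed



definition beta :: "real \<Rightarrow> real \<Rightarrow> nat \<Rightarrow> real" where
  "beta \<mu> L1 k = ((real k + 1) * real k * \<mu> + L1\<^sup>2 / \<mu>) / 2"

lemma ss_facts:
  fixes k :: nat
  assumes mu: "\<mu> > 0" and L1: "L1 \<ge> 0"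
  defines "a \<equiv> step_size \<mu> L1 k"
  shows "a > 0" "\<mu> * a \<le> 1" "L1 * a \<le> 1" "(real k + 1) * a \<le> 2 / \<mu>"
    "(real k + 1) / a = beta \<mu> L1 (Suc k)"
    "(real k + 1) / a * (1 - \<mu> * a) = beta \<mu> L1 k"
proof -
  define den where "den = \<mu> * (real k + 2) + L1\<^sup>2 / (\<mu> * (real k + 1))"
  have p: "\<mu> * (real k + 1) > 0" using mu by simp
  have q: "L1\<^sup>2 / (\<mu> * (real k + 1)) \<ge> 0" using p by simp
  have den1: "den \<ge> \<mu> * (real k + 2)" using q by (simp add: den_def)
  have denp: "den > 0" using den1 mu by (smt (verit) mult_pos_pos of_nat_0_le_iff)
  have aeq: "a = 2 / den" by (simp add: a_def step_size_def den_def)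
  show "a > 0" using denp aeq by simp
  have "\<mu> * a = (2 * \<mu>) / den" using aeq by simp
  moreover have "2 * \<mu> \<le> den"
  proof -
    have "\<mu> * 2 \<le> \<mu> * (real k + 2)" using mu by (intro mult_left_mono) auto
    then show ?thesis using den1 by simp
  qed
  ultimately show "\<mu> * a \<le> 1" using denp by simp
  have "\<mu> * (real k + 1) + L1\<^sup>2 / (\<mu> * (real k + 1)) \<ge> 2 * L1"
  proof -
    define m where "m = \<mu> * (real k + 1)"
    have mp: "m > 0" using p by (simp add: m_def)
    have "(m - L1)\<^sup>2 \<ge> 0" by simp
    then have "m * m + L1\<^sup>2 \<ge> 2 * L1 * m"
      by (simp add: power2_diff algebra_simps power2_eq_square)
    then have "(m * m + L1\<^sup>2) / m \<ge> 2 * L1" using mp by (simp add: le_divide_eq)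
    moreover have "(m * m + L1\<^sup>2) / m = m + L1\<^sup>2 / m" using mp by (simp add: add_divide_distrib)
    ultimately show ?thesis by (simp add: m_def)
  qed
  then have "den \<ge> 2 * L1" unfolding den_def using mu by (simp add: algebra_simps)
  moreover have "L1 * a = (2 * L1) / den" using aeq by simp
  ultimately show "L1 * a \<le> 1" using denp by simp
  have "(real k + 1) * a = (2 * (real k + 1)) / den" using aeq by simp
  also have "\<dots> \<le> (2 * (real k + 1)) / (\<mu> * (real k + 1))"
    by (rule frac_le) (use den1 p mu in \<open>auto simp: algebra_simps\<close>)
  also have "\<dots> = 2 / \<mu>" using p mu by (simp add: field_simps)
  finally show "(real k + 1) * a \<le> 2 / \<mu>" .
  have e1: "(real k + 1) / a = (real k + 1) * den / 2" using aeq denp by simp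
  have dd: "(real k + 1) * den = \<mu> * (real k + 1) * (real k + 2) + L1\<^sup>2 / \<mu>"
  proof -
    have "(real k + 1) * (L1\<^sup>2 / (\<mu> * (real k + 1))) = L1\<^sup>2 / \<mu>"
      using p mu by (simp add: field_simps)
    then show ?thesis unfolding den_def by (simp add: distrib_left algebra_simps)
  qed
  show "(real k + 1) / a = beta \<mu> L1 (Suc k)"
    unfolding e1 dd beta_def by (simp add: algebra_simps)
  have "(real k + 1) / a * (1 - \<mu> * a) = (real k + 1) / a - \<mu> * (real k + 1)"
    using \<open>a > 0\<close> by (simp add: right_diff_distrib)
  also have "\<dots> = beta \<mu> L1 k"
    unfolding e1 dd beta_def by (simp add: algebra_simps)
  finally show "(real k + 1) / a * (1 - \<mu> * a) = beta \<mu> L1 k" .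
qed

lemma beta_nonneg: "\<mu> > 0 \<Longrightarrow> beta \<mu> L1 k \<ge> 0"
  unfolding beta_def by simp

lemma sum_kp1: "(\<Sum>k\<le>T. real k + 1) = (real T + 1) * (real T + 2) / 2"
  by (induction T) (auto simp: field_simps)


lemma jensen_pt:
  fixes f :: "'a::real_vector \<Rightarrow> ereal"
  assumes cf: "convex_fun f" and Qc: "convex Q" and fin: "\<forall>x\<in>Q. f x < \<infinity>" and pr: "\<forall>x. f x \<noteq> -\<infinity>"
    and S: "finite S" "S \<noteq> {}" and l: "\<And>i. i \<in> S \<Longrightarrow> l i \<ge> 0" "sum l S = 1"
    and y: "\<And>i. i \<in> S \<Longrightarrow> y i \<in> Q"
    and ge: "\<And>i. i \<in> S \<Longrightarrow> fstar \<le> real_of_ereal (f (y i))"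
  shows "e2ennreal (f (\<Sum>i\<in>S. l i *\<^sub>R y i) - ereal fstar)
     \<le> (\<Sum>i\<in>S. ennreal (l i) * ennreal (real_of_ereal (f (y i)) - fstar))"
proof -
  define fr where "fr x = real_of_ereal (f x)" for x
  have fe: "f x = ereal (fr x)" if "x \<in> Q" for x
    using fin pr that unfolding fr_def by (cases "f x") auto
  have cvx: "convex_on Q fr"
  proof (rule convex_onI[OF _ Qc])
    fix t :: real and x y assume t: "0 < t" "t < 1" and xy: "x \<in> Q" "y \<in> Q"
    have inq: "(1 - t) *\<^sub>R x + t *\<^sub>R y \<in> Q" using Qc xy t by (simp add: convex_def)
    moreover have "f ((1 - t) *\<^sub>R x + t *\<^sub>R y) \<le> ereal (1 - t) * f x + ereal t * f y"
      using cf t unfolding convex_fun_def by simp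
    ultimately show "fr ((1 - t) *\<^sub>R x + t *\<^sub>R y) \<le> (1 - t) * fr x + t * fr y"
      using fe[OF xy(1)] fe[OF xy(2)] fe[OF inq] by simp
  qed
  have inQ: "(\<Sum>i\<in>S. l i *\<^sub>R y i) \<in> Q"
    using Qc S l y by (intro convex_sum) auto
  have J: "fr (\<Sum>i\<in>S. l i *\<^sub>R y i) \<le> (\<Sum>i\<in>S. l i * fr (y i))"
    using convex_on_sum[OF S cvx l(2) l(1) y] .
  have "fr (\<Sum>i\<in>S. l i *\<^sub>R y i) - fstar \<le> (\<Sum>i\<in>S. l i * (fr (y i) - fstar))"
    using J l(2) by (simp add: right_diff_distrib sum_subtractf sum_distrib_right[symmetric])
  then have "ennreal (fr (\<Sum>i\<in>S. l i *\<^sub>R y i) - fstar) \<le> ennreal (\<Sum>i\<in>S. l i * (fr (y i) - fstar))"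
    by (rule ennreal_leI)
  also have "\<dots> = (\<Sum>i\<in>S. ennreal (l i * (fr (y i) - fstar)))"
    using l(1) ge by (intro sum_ennreal[symmetric]) (auto simp: fr_def)
  also have "\<dots> = (\<Sum>i\<in>S. ennreal (l i) * ennreal (fr (y i) - fstar))"
    using l(1) by (intro sum.cong refl) (simp add: ennreal_mult ennreal_mult' )
  finally have X: "ennreal (fr (\<Sum>i\<in>S. l i *\<^sub>R y i) - fstar)
     \<le> (\<Sum>i\<in>S. ennreal (l i) * ennreal (fr (y i) - fstar))" .
  have "e2ennreal (f (\<Sum>i\<in>S. l i *\<^sub>R y i) - ereal fstar) = ennreal (fr (\<Sum>i\<in>S. l i *\<^sub>R y i) - fstar)"
    using fe[OF inQ] by simp
  with X show ?thesis unfolding fr_def by (simp only:)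
qed


lemma prod_step:
  fixes D :: "'b measure" and h :: "(nat \<Rightarrow> 'b) \<Rightarrow> 'b \<Rightarrow> ennreal"
  assumes D: "prob_space D" and k: "k \<le> T"
    and hm: "(\<lambda>(\<omega>, \<xi>). h \<omega> \<xi>) \<in> borel_measurable (PiM {..T} (\<lambda>_. D) \<Otimes>\<^sub>M D)"
    and inv: "\<And>\<omega> y. h (fun_upd \<omega> k y) = h \<omega>"
  shows "(\<integral>\<^sup>+\<omega>. h \<omega> (\<omega> k) \<partial>PiM {..T} (\<lambda>_. D)) = (\<integral>\<^sup>+\<omega>. (\<integral>\<^sup>+\<xi>. h \<omega> \<xi> \<partial>D) \<partial>PiM {..T} (\<lambda>_. D))"
proof -
  interpret D: prob_space D by fact
  interpret P: product_sigma_finite "\<lambda>_. D"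
    by (simp add: product_sigma_finite_def D.sigma_finite_measure_axioms)
  define I where "I = {..T} - {k}"
  have ins: "{..T} = insert k I" using k by (auto simp: I_def)
  have fI: "finite I" "k \<notin> I" by (auto simp: I_def)
  have m1: "(\<lambda>\<omega>. h \<omega> (\<omega> k)) \<in> borel_measurable (PiM {..T} (\<lambda>_. D))"
  proof -
    have "(\<lambda>\<omega>. (\<omega>, \<omega> k)) \<in> measurable (PiM {..T} (\<lambda>_. D)) (PiM {..T} (\<lambda>_. D) \<Otimes>\<^sub>M D)"
      using k by (intro measurable_Pair) (auto intro: measurable_component_singleton)
    from measurable_comp[OF this hm] show ?thesis by (simp add: comp_def)
  qed
  have m2: "(\<lambda>\<omega>. \<integral>\<^sup>+\<xi>. h \<omega> \<xi> \<partial>D) \<in> borel_measurable (PiM {..T} (\<lambda>_. D))"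
    using D.borel_measurable_nn_integral_fst[OF hm] by simp
  have "(\<integral>\<^sup>+\<omega>. h \<omega> (\<omega> k) \<partial>PiM {..T} (\<lambda>_. D))
      = (\<integral>\<^sup>+ x. (\<integral>\<^sup>+ y. h x y \<partial>D) \<partial>(PiM I (\<lambda>_. D)))"
    using P.product_nn_integral_insert[OF fI, of "\<lambda>\<omega>. h \<omega> (\<omega> k)"] m1 unfolding ins
    by (simp add: inv)
  also have "\<dots> = (\<integral>\<^sup>+\<omega>. (\<integral>\<^sup>+\<xi>. h \<omega> \<xi> \<partial>D) \<partial>PiM {..T} (\<lambda>_. D))"
    using P.product_nn_integral_insert[OF fI, of "\<lambda>\<omega>. \<integral>\<^sup>+\<xi>. h \<omega> \<xi> \<partial>D"] m2 unfolding ins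
    by (simp add: inv D.emeasure_space_1)
  finally show ?thesis .
qed


lemma alg2:
  fixes \<mu> p q L0 L1 D :: real
  assumes "\<mu> > 0" "p > 0" "q > 0"
  shows "(2 / (p * q)) * (((1 * 0 * \<mu> + L1\<^sup>2 / \<mu>) / 2) * D + L0\<^sup>2 * (2 * p / \<mu>))
     = 4 * L0\<^sup>2 / (\<mu> * q) + L1\<^sup>2 * D / (\<mu> * p * q)"
  using assms by (simp add: field_simps)

theorem theorem1p7:
  fixes f :: "'a::euclidean_space \<Rightarrow> ereal"
    and Q :: "'a set"
    and D :: "'b measure"
    and g :: "'a \<Rightarrow> 'b \<Rightarrow> 'a"
    and \<mu> L0 L1 fstar :: real
    and xstar x0 :: 'a
    and T :: nat
  assumes f_proper: "\<forall>x. f x \<noteq> -\<infinity>"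
    and f_lsc: "lsc_fun f"
    and f_convex: "convex_fun f"
    and Q_ne: "Q \<noteq> {}" and Q_closed: "closed Q" and Q_convex: "convex Q"
    and Q_dom: "\<forall>x\<in>Q. f x < \<infinity>"
    and xstar_Q: "xstar \<in> Q" and fstar_def: "f xstar = ereal fstar"
    and xstar_min: "\<forall>y\<in>Q. f xstar \<le> f y"
    and mu_pos: "\<mu> > 0"
    and strong: "strongly_convex_on \<mu> Q f"
    and D_prob: "prob_space D"
    and g_meas: "(\<lambda>(x, \<xi>). g x \<xi>) \<in> borel_measurable (borel \<Otimes>\<^sub>M D)"
    and g_int: "\<forall>x\<in>Q. integrable D (g x)"
    and g_unbiased: "\<forall>x\<in>Q. (\<integral>\<xi>. g x \<xi> \<partial>D) \<in> subdiff f x"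
    and L0_nonneg: "L0 \<ge> 0" and L1_nonneg: "L1 \<ge> 0"
    and g_second_moment: "\<forall>x\<in>Q. (\<integral>\<^sup>+\<xi>. ennreal ((norm (g x \<xi>))\<^sup>2) \<partial>D)
                         \<le> ennreal (L0\<^sup>2 + L1 * (real_of_ereal (f x) - fstar))"
    and x0_Q: "x0 \<in> Q"
  shows "(\<integral>\<^sup>+\<omega>. e2ennreal (f ((\<Sum>k\<le>T. ((real k + 1) * (2 - L1 * step_size \<mu> L1 k)) *\<^sub>R
                   psg_iter Q g (step_size \<mu> L1) x0 \<omega> k)
               /\<^sub>R (\<Sum>k\<le>T. (real k + 1) * (2 - L1 * step_size \<mu> L1 k))) - ereal fstar)
          \<partial>(PiM {..T} (\<lambda>_. D)))
        \<le> ennreal ((2 * L0\<^sup>2 * (real T + 1) + L1\<^sup>2 * (norm (x0 - xstar))\<^sup>2 / 2)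
                 / (\<mu> * (\<Sum>k\<le>T. (real k + 1) * (2 - L1 * step_size \<mu> L1 k))))
      \<and> (\<integral>\<^sup>+\<omega>. e2ennreal (f ((2 / ((real T + 1) * (real T + 2))) *\<^sub>R
                   (\<Sum>k\<le>T. (real k + 1) *\<^sub>R psg_iter Q g (step_size \<mu> L1) x0 \<omega> k)) - ereal fstar)
          \<partial>(PiM {..T} (\<lambda>_. D)))
        \<le> ennreal (4 * L0\<^sup>2 / (\<mu> * (real T + 2))
                 + L1\<^sup>2 * (norm (x0 - xstar))\<^sup>2 / (\<mu> * (real T + 1) * (real T + 2)))"
proof -
  interpret D: prob_space D by (rule D_prob)
  define M where "M = PiM {..T} (\<lambda>_. D)"
  have PM: "prob_space M" unfolding M_def using D_prob by (intro prob_space_PiM) auto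
  interpret PM: prob_space M by (rule PM)
  define \<alpha> where "\<alpha> = step_size \<mu> L1"
  define X where "X k \<omega> = psg_iter Q g \<alpha> x0 \<omega> k" for k \<omega>
  define e where "e y = real_of_ereal (f y) - fstar" for y
  define w where "w k = (real k + 1) * (2 - L1 * \<alpha> k)" for k
  define \<beta> where "\<beta> = beta \<mu> L1"
  define E where "E k = (\<integral>\<^sup>+\<omega>. ennreal ((norm (X k \<omega> - xstar))\<^sup>2) \<partial>M)" for k
  define F where "F k = (\<integral>\<^sup>+\<omega>. ennreal (e (X k \<omega>)) \<partial>M)" for k
  define D0 where "D0 = (norm (x0 - xstar))\<^sup>2"
  have XQ: "X k \<omega> \<in> Q" for k \<omega>
    unfolding X_def using Q_convex Q_closed Q_ne x0_Q by (rule iter_in_Q)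
  have fe: "f y = ereal (real_of_ereal (f y))" if "y \<in> Q" for y
    using Q_dom f_proper that by (cases "f y") auto
  have e_nn: "0 \<le> e y" if "y \<in> Q" for y
  proof -
    have "f xstar \<le> f y" using xstar_min that by blast
    then have "ereal fstar \<le> ereal (real_of_ereal (f y))"
      unfolding fstar_def by (subst (asm) fe[OF that]) simp
    then show ?thesis by (simp add: e_def)
  qed
  have ssk: "\<alpha> k > 0" "\<mu> * \<alpha> k \<le> 1" "L1 * \<alpha> k \<le> 1" "(real k + 1) * \<alpha> k \<le> 2 / \<mu>"
     "(real k + 1) / \<alpha> k = \<beta> (Suc k)" "(real k + 1) / \<alpha> k * (1 - \<mu> * \<alpha> k) = \<beta> k" for k
    using ss_facts[OF mu_pos L1_nonneg, of k] by (auto simp: \<alpha>_def \<beta>_def)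
  have w_ge: "w k \<ge> real k + 1" for k
  proof -
    have "2 - L1 * \<alpha> k \<ge> 1" using ssk(3)[of k] by simp
    then have "(real k + 1) * 1 \<le> (real k + 1) * (2 - L1 * \<alpha> k)" by (intro mult_left_mono) auto
    then show ?thesis by (simp add: w_def)
  qed
  have w_nn: "w k \<ge> 0" for k using w_ge[of k] by simp
  have \<beta>_nn: "\<beta> k \<ge> 0" for k unfolding \<beta>_def using mu_pos by (rule beta_nonneg)
  have fm: "f \<in> borel_measurable borel" using f_lsc by (rule lsc_measurable)
  have Xm: "X k \<in> borel_measurable M" if "k \<le> Suc T" for k
    unfolding X_def M_def using iter_meas[OF Q_convex Q_closed Q_ne g_meas that] .
  have em: "(\<lambda>\<omega>. e (X k \<omega>)) \<in> borel_measurable M" if "k \<le> Suc T" for k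
  proof -
    have "(\<lambda>\<omega>. f (X k \<omega>)) \<in> borel_measurable M" using measurable_comp[OF Xm[OF that] fm] by (simp add: comp_def)
    then show ?thesis unfolding e_def by (intro borel_measurable_diff borel_measurable_real_of_ereal measurable_const) simp_all
  qed
  have sqm: "(\<lambda>y::'a. (norm (y - xstar))\<^sup>2) \<in> borel_measurable borel"
    by (intro borel_measurable_continuous_onI continuous_intros)
  have Dm: "(\<lambda>\<omega>. (norm (X k \<omega> - xstar))\<^sup>2) \<in> borel_measurable M" if "k \<le> Suc T" for k
    using measurable_comp[OF Xm[OF that] sqm] by (simp add: comp_def)
  have Cm: "closest_point Q \<in> borel_measurable borel"
    using continuous_on_closest_point[OF Q_convex Q_closed Q_ne] by (rule borel_measurable_continuous_onI)

  have step: "ennreal (\<beta> (Suc k)) * E (Suc k) + ennreal (w k) * F k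
      \<le> ennreal (\<beta> k) * E k + ennreal ((real k + 1) * \<alpha> k * L0\<^sup>2)" if kT: "k \<le> T" for k
  proof -
    define a where "a = \<alpha> k"
    have XkT: "k \<le> Suc T" and SkT: "Suc k \<le> Suc T" using kT by simp_all
    define P where "P \<omega> \<xi> = closest_point Q (X k \<omega> - a *\<^sub>R g (X k \<omega>) \<xi>)" for \<omega> \<xi>
    define hh where "hh \<omega> \<xi> = ennreal (\<beta> (Suc k)) * ennreal ((norm (P \<omega> \<xi> - xstar))\<^sup>2) + ennreal (w k) * ennreal (e (X k \<omega>))" for \<omega> \<xi>
    have Xfst: "(\<lambda>p. X k (fst p)) \<in> borel_measurable (M \<Otimes>\<^sub>M D)"
      using measurable_comp[OF measurable_fst Xm[OF XkT]] by (simp add: comp_def)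
    have gp: "(\<lambda>p. g (X k (fst p)) (snd p)) \<in> borel_measurable (M \<Otimes>\<^sub>M D)"
    proof -
      have "(\<lambda>p. (X k (fst p), snd p)) \<in> measurable (M \<Otimes>\<^sub>M D) (borel \<Otimes>\<^sub>M D)"
        using Xfst by (intro measurable_Pair) auto
      from measurable_comp[OF this g_meas] show ?thesis by (simp add: comp_def)
    qed
    have Pm: "(\<lambda>p. P (fst p) (snd p)) \<in> borel_measurable (M \<Otimes>\<^sub>M D)"
    proof -
      have "(\<lambda>p. X k (fst p) - a *\<^sub>R g (X k (fst p)) (snd p)) \<in> borel_measurable (M \<Otimes>\<^sub>M D)"
        by (intro borel_measurable_diff borel_measurable_scaleR measurable_const Xfst gp) simp_all
      from measurable_comp[OF this Cm] show ?thesis by (simp add: comp_def P_def)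
    qed
    have emX: "(\<lambda>p. e (X k (fst p))) \<in> borel_measurable (M \<Otimes>\<^sub>M D)"
      using measurable_comp[OF measurable_fst em[OF XkT]] by (simp add: comp_def)
    have Pn: "(\<lambda>p. (norm (P (fst p) (snd p) - xstar))\<^sup>2) \<in> borel_measurable (M \<Otimes>\<^sub>M D)"
      using measurable_comp[OF Pm sqm] by (simp add: comp_def)
    note [measurable] = Pn emX Dm[OF SkT] em[OF XkT] Dm[OF XkT]
    have hhm: "(\<lambda>(\<omega>, \<xi>). hh \<omega> \<xi>) \<in> borel_measurable (M \<Otimes>\<^sub>M D)"
    proof -
      have "(\<lambda>p. hh (fst p) (snd p)) \<in> borel_measurable (M \<Otimes>\<^sub>M D)"
        unfolding hh_def by measurable
      then show ?thesis by (simp add: case_prod_beta')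
    qed
    have inv: "hh (fun_upd \<omega> k y) = hh \<omega>" for \<omega> y
      by (rule ext) (simp add: hh_def P_def X_def iter_upd)
    have "ennreal (\<beta> (Suc k)) * E (Suc k) + ennreal (w k) * F k = (\<integral>\<^sup>+\<omega>. hh \<omega> (\<omega> k) \<partial>M)"
    proof -
      have "(\<integral>\<^sup>+\<omega>. hh \<omega> (\<omega> k) \<partial>M) = (\<integral>\<^sup>+\<omega>. ennreal (\<beta> (Suc k)) * ennreal ((norm (X (Suc k) \<omega> - xstar))\<^sup>2) + ennreal (w k) * ennreal (e (X k \<omega>)) \<partial>M)"
        by (simp add: hh_def P_def X_def a_def)
      also have "\<dots> = (\<integral>\<^sup>+\<omega>. ennreal (\<beta> (Suc k)) * ennreal ((norm (X (Suc k) \<omega> - xstar))\<^sup>2) \<partial>M) + (\<integral>\<^sup>+\<omega>. ennreal (w k) * ennreal (e (X k \<omega>)) \<partial>M)"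
        by (intro nn_integral_add) measurable
      also have "\<dots> = ennreal (\<beta> (Suc k)) * E (Suc k) + ennreal (w k) * F k"
      proof -
        have m1: "(\<lambda>\<omega>. ennreal ((norm (X (Suc k) \<omega> - xstar))\<^sup>2)) \<in> borel_measurable M" by measurable
        have m2: "(\<lambda>\<omega>. ennreal (e (X k \<omega>))) \<in> borel_measurable M" by measurable
        show ?thesis unfolding E_def F_def by (simp add: nn_integral_cmult m1 m2)
      qed
      finally show ?thesis ..
    qed
    also have "\<dots> = (\<integral>\<^sup>+\<omega>. (\<integral>\<^sup>+\<xi>. hh \<omega> \<xi> \<partial>D) \<partial>M)"
      unfolding M_def by (rule prod_step[OF D_prob kT hhm[unfolded M_def] inv])
    also have "\<dots> \<le> (\<integral>\<^sup>+\<omega>. ennreal (\<beta> k * (norm (X k \<omega> - xstar))\<^sup>2) + ennreal ((real k + 1) * a * L0\<^sup>2) \<partial>M)"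
    proof (rule nn_integral_mono)
      fix \<omega>
      define x where "x = X k \<omega>"
      have xQ: "x \<in> Q" using XQ by (simp add: x_def)
      define R where "R = (1 - \<mu> * a) * (norm (x - xstar))\<^sup>2 + a\<^sup>2 * L0\<^sup>2 - a * (2 - L1 * a) * e x"
      define h where "h = (\<integral>\<^sup>+\<xi>. ennreal ((norm (closest_point Q (x - a *\<^sub>R g x \<xi>) - xstar))\<^sup>2) \<partial>D)"
      have os: "h \<le> ennreal R \<and> 0 \<le> R"
        unfolding h_def R_def e_def
      proof (rule one_step[OF D_prob xQ xstar_Q Q_convex Q_closed Q_ne fe[OF xQ] fstar_def strong])
        show "integrable D (g x)" using g_int xQ by blast
        show "(\<integral>\<xi>. g x \<xi> \<partial>D) \<in> subdiff f x" using g_unbiased xQ by blast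
        show "(\<integral>\<^sup>+\<xi>. ennreal ((norm (g x \<xi>))\<^sup>2) \<partial>D) \<le> ennreal (L0\<^sup>2 + L1 * (real_of_ereal (f x) - fstar))"
          using g_second_moment xQ by blast
        show "0 \<le> a" using ssk(1)[of k] by (simp add: a_def)
        show "fstar \<le> real_of_ereal (f x)" using e_nn[OF xQ] by (simp add: e_def)
        show "0 \<le> L1" by (rule L1_nonneg)
      qed
      have gxm: "g x \<in> borel_measurable D" using g_int xQ borel_measurable_integrable by blast
      have hm2: "(\<lambda>\<xi>. (norm (closest_point Q (x - a *\<^sub>R g x \<xi>) - xstar))\<^sup>2) \<in> borel_measurable D"
      proof -
        have "(\<lambda>\<xi>. x - a *\<^sub>R g x \<xi>) \<in> borel_measurable D"
          by (intro borel_measurable_diff borel_measurable_scaleR measurable_const gxm) simp_all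
        from measurable_comp[OF measurable_comp[OF this Cm] sqm] show ?thesis by (simp add: comp_def)
      qed
      have inner: "(\<integral>\<^sup>+\<xi>. hh \<omega> \<xi> \<partial>D) = ennreal (\<beta> (Suc k)) * h + ennreal (w k) * ennreal (e x)"
      proof -
        have "(\<integral>\<^sup>+\<xi>. hh \<omega> \<xi> \<partial>D) = (\<integral>\<^sup>+\<xi>. ennreal (\<beta> (Suc k)) * ennreal ((norm (closest_point Q (x - a *\<^sub>R g x \<xi>) - xstar))\<^sup>2) \<partial>D) + (\<integral>\<^sup>+\<xi>. ennreal (w k) * ennreal (e x) \<partial>D)"
          unfolding hh_def P_def x_def[symmetric] using hm2 by (intro nn_integral_add) auto
        also have "\<dots> = ennreal (\<beta> (Suc k)) * h + ennreal (w k) * ennreal (e x)"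
          unfolding h_def using hm2 by (simp add: nn_integral_cmult D.emeasure_space_1)
        finally show ?thesis .
      qed
      have eq: "\<beta> (Suc k) * R + w k * e x = \<beta> k * (norm (x - xstar))\<^sup>2 + (real k + 1) * a * L0\<^sup>2"
      proof -
        have ap: "a > 0" using ssk(1)[of k] by (simp add: a_def)
        define c where "c = (real k + 1) / a"
        have b1: "\<beta> (Suc k) = c" using ssk(5)[of k] by (simp add: a_def c_def)
        have b0: "\<beta> k = c * (1 - \<mu> * a)" using ssk(6)[of k] by (simp add: a_def c_def)
        have c1: "c * a\<^sup>2 = (real k + 1) * a" using ap by (simp add: power2_eq_square c_def)
        have c2: "c * a = (real k + 1)" using ap by (simp add: c_def)
        have "\<beta> (Suc k) * R = (c * (1 - \<mu> * a)) * (norm (x - xstar))\<^sup>2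
            + (c * a\<^sup>2) * L0\<^sup>2 - (c * a) * (2 - L1 * a) * e x"
          unfolding b1 R_def by (simp add: algebra_simps)
        also have "\<dots> = \<beta> k * (norm (x - xstar))\<^sup>2 + (real k + 1) * a * L0\<^sup>2 - w k * e x"
          unfolding c1 c2 b0[symmetric] by (simp add: w_def a_def)
        finally show ?thesis by simp
      qed
      have "(\<integral>\<^sup>+\<xi>. hh \<omega> \<xi> \<partial>D) \<le> ennreal (\<beta> (Suc k)) * ennreal R + ennreal (w k * e x)"
        unfolding inner using os w_nn[of k] e_nn[OF xQ]
        by (intro add_mono mult_left_mono) (auto simp: ennreal_mult)
      also have "\<dots> = ennreal (\<beta> (Suc k) * R + w k * e x)"
        using os \<beta>_nn[of "Suc k"] w_nn[of k] e_nn[OF xQ] by (simp add: ennreal_mult ennreal_plus)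
      also have "\<dots> = ennreal (\<beta> k * (norm (X k \<omega> - xstar))\<^sup>2) + ennreal ((real k + 1) * a * L0\<^sup>2)"
        unfolding eq unfolding x_def
        by (rule ennreal_plus) (use \<beta>_nn[of k] ssk(1)[of k] in \<open>auto simp: a_def\<close>)
      finally show "(\<integral>\<^sup>+\<xi>. hh \<omega> \<xi> \<partial>D) \<le> ennreal (\<beta> k * (norm (X k \<omega> - xstar))\<^sup>2) + ennreal ((real k + 1) * a * L0\<^sup>2)" .
    qed
    also have "\<dots> = ennreal (\<beta> k) * E k + ennreal ((real k + 1) * \<alpha> k * L0\<^sup>2)"
    proof -
      have "(\<integral>\<^sup>+\<omega>. ennreal (\<beta> k * (norm (X k \<omega> - xstar))\<^sup>2) + ennreal ((real k + 1) * a * L0\<^sup>2) \<partial>M)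
          = (\<integral>\<^sup>+\<omega>. ennreal (\<beta> k) * ennreal ((norm (X k \<omega> - xstar))\<^sup>2) \<partial>M) + (\<integral>\<^sup>+\<omega>. ennreal ((real k + 1) * a * L0\<^sup>2) \<partial>M)"
      proof -
        have m1: "(\<lambda>\<omega>. ennreal (\<beta> k) * ennreal ((norm (X k \<omega> - xstar))\<^sup>2)) \<in> borel_measurable M" by measurable
        have "(\<integral>\<^sup>+\<omega>. ennreal (\<beta> k * (norm (X k \<omega> - xstar))\<^sup>2) + ennreal ((real k + 1) * a * L0\<^sup>2) \<partial>M)
          = (\<integral>\<^sup>+\<omega>. ennreal (\<beta> k) * ennreal ((norm (X k \<omega> - xstar))\<^sup>2) + ennreal ((real k + 1) * a * L0\<^sup>2) \<partial>M)"
          using \<beta>_nn[of k] by (simp add: ennreal_mult)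
        also have "\<dots> = (\<integral>\<^sup>+\<omega>. ennreal (\<beta> k) * ennreal ((norm (X k \<omega> - xstar))\<^sup>2) \<partial>M) + (\<integral>\<^sup>+\<omega>. ennreal ((real k + 1) * a * L0\<^sup>2) \<partial>M)"
          by (rule nn_integral_add) (use m1 in auto)
        finally show ?thesis .
      qed
      also have "\<dots> = ennreal (\<beta> k) * E k + ennreal ((real k + 1) * \<alpha> k * L0\<^sup>2)"
      proof -
        have m2: "(\<lambda>\<omega>. ennreal ((norm (X k \<omega> - xstar))\<^sup>2)) \<in> borel_measurable M" by measurable
        show ?thesis unfolding E_def by (simp add: nn_integral_cmult m2 PM.emeasure_space_1 a_def)
      qed
      finally show ?thesis .
    qed
    finally show ?thesis .
  qed
  have E0: "E 0 = ennreal D0"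
    unfolding E_def X_def D0_def by (simp add: PM.emeasure_space_1)
  have tele: "ennreal (\<beta> n) * E n + (\<Sum>k<n. ennreal (w k) * F k)
      \<le> ennreal (\<beta> 0 * D0 + L0\<^sup>2 * (\<Sum>k<n. (real k + 1) * \<alpha> k))" if "n \<le> Suc T" for n
    using that
  proof (induction n)
    case 0
    show ?case using \<beta>_nn[of 0] by (simp add: E0 D0_def ennreal_mult)
  next
    case (Suc n)
    have nT: "n \<le> T" using Suc.prems by simp
    have IH: "ennreal (\<beta> n) * E n + (\<Sum>k<n. ennreal (w k) * F k) \<le> ennreal (\<beta> 0 * D0 + L0\<^sup>2 * (\<Sum>k<n. (real k + 1) * \<alpha> k))"
      using Suc.IH Suc.prems by simp
    have nn0: "0 \<le> (\<Sum>k<n. (real k + 1) * \<alpha> k)"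
      using ssk(1) by (intro sum_nonneg) (simp add: less_imp_le)
    have nn1: "0 \<le> \<beta> 0 * D0 + L0\<^sup>2 * (\<Sum>k<n. (real k + 1) * \<alpha> k)"
      using \<beta>_nn[of 0] nn0 by (simp add: D0_def)
    have nn2: "0 \<le> (real n + 1) * \<alpha> n * L0\<^sup>2" using ssk(1)[of n] by simp
    have "ennreal (\<beta> (Suc n)) * E (Suc n) + (\<Sum>k<Suc n. ennreal (w k) * F k)
        = (ennreal (\<beta> (Suc n)) * E (Suc n) + ennreal (w n) * F n) + (\<Sum>k<n. ennreal (w k) * F k)"
      by (simp add: ac_simps)
    also have "\<dots> \<le> (ennreal (\<beta> n) * E n + ennreal ((real n + 1) * \<alpha> n * L0\<^sup>2)) + (\<Sum>k<n. ennreal (w k) * F k)"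
      using step[OF nT] by (rule add_right_mono)
    also have "\<dots> = (ennreal (\<beta> n) * E n + (\<Sum>k<n. ennreal (w k) * F k)) + ennreal ((real n + 1) * \<alpha> n * L0\<^sup>2)"
      by (simp add: ac_simps)
    also have "\<dots> \<le> ennreal (\<beta> 0 * D0 + L0\<^sup>2 * (\<Sum>k<n. (real k + 1) * \<alpha> k)) + ennreal ((real n + 1) * \<alpha> n * L0\<^sup>2)"
      using IH by (rule add_right_mono)
    also have "\<dots> = ennreal (\<beta> 0 * D0 + L0\<^sup>2 * (\<Sum>k<n. (real k + 1) * \<alpha> k) + (real n + 1) * \<alpha> n * L0\<^sup>2)"
      by (rule ennreal_plus[symmetric, OF nn1 nn2])
    also have "\<dots> = ennreal (\<beta> 0 * D0 + L0\<^sup>2 * (\<Sum>k<Suc n. (real k + 1) * \<alpha> k))"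
      by (simp add: algebra_simps)
    finally show ?case .
  qed
  define B where "B = \<beta> 0 * D0 + L0\<^sup>2 * (2 * (real T + 1) / \<mu>)"
  have SB: "(\<Sum>k\<le>T. ennreal (w k) * F k) \<le> ennreal B"
  proof -
    have "(\<Sum>k\<le>T. ennreal (w k) * F k) \<le> ennreal (\<beta> (Suc T)) * E (Suc T) + (\<Sum>k<Suc T. ennreal (w k) * F k)"
      unfolding lessThan_Suc_atMost by (rule add_increasing) auto
    also have "\<dots> \<le> ennreal (\<beta> 0 * D0 + L0\<^sup>2 * (\<Sum>k<Suc T. (real k + 1) * \<alpha> k))" by (rule tele) simp
    also have "\<dots> \<le> ennreal B"
    proof (rule ennreal_leI)
      have "(\<Sum>k<Suc T. (real k + 1) * \<alpha> k) \<le> (\<Sum>k<Suc T. 2 / \<mu>)" by (rule sum_mono) (rule ssk(4))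
      also have "\<dots> = 2 * (real T + 1) / \<mu>" by (simp add: field_simps)
      finally have "L0\<^sup>2 * (\<Sum>k<Suc T. (real k + 1) * \<alpha> k) \<le> L0\<^sup>2 * (2 * (real T + 1) / \<mu>)"
        by (intro mult_left_mono) auto
      then show "\<beta> 0 * D0 + L0\<^sup>2 * (\<Sum>k<Suc T. (real k + 1) * \<alpha> k) \<le> B" unfolding B_def by simp
    qed
    finally show ?thesis .
  qed
  have Fm: "(\<lambda>\<omega>. ennreal (e (X k \<omega>))) \<in> borel_measurable M" if "k \<le> T" for k
    using em[of k] that by simp
  have intsum: "(\<integral>\<^sup>+\<omega>. (\<Sum>k\<le>T. ennreal (l k) * ennreal (e (X k \<omega>))) \<partial>M) = (\<Sum>k\<le>T. ennreal (l k) * F k)" for l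
  proof -
    have "(\<integral>\<^sup>+\<omega>. (\<Sum>k\<le>T. ennreal (l k) * ennreal (e (X k \<omega>))) \<partial>M) = (\<Sum>k\<le>T. (\<integral>\<^sup>+\<omega>. ennreal (l k) * ennreal (e (X k \<omega>)) \<partial>M))"
      by (rule nn_integral_sum) (use Fm in auto)
    also have "\<dots> = (\<Sum>k\<le>T. ennreal (l k) * F k)"
      unfolding F_def by (intro sum.cong refl nn_integral_cmult) (use Fm in auto)
    finally show ?thesis .
  qed
  define W where "W = (\<Sum>k\<le>T. w k)"
  have Wpos: "W > 0"
  proof -
    have "w 0 \<le> W" unfolding W_def by (rule member_le_sum) (auto intro: w_nn)
    then show ?thesis using w_ge[of 0] by simp
  qed
  have C1: "(\<integral>\<^sup>+\<omega>. e2ennreal (f ((\<Sum>k\<le>T. w k *\<^sub>R X k \<omega>) /\<^sub>R W) - ereal fstar) \<partial>M)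
      \<le> ennreal ((2 * L0\<^sup>2 * (real T + 1) + L1\<^sup>2 * (norm (x0 - xstar))\<^sup>2 / 2) / (\<mu> * W))"
  proof -
    define l where "l k = inverse W * w k" for k
    have l1: "sum l {..T} = 1" unfolding l_def W_def[symmetric] sum_distrib_left[symmetric] using Wpos by simp
    have pw: "e2ennreal (f ((\<Sum>k\<le>T. w k *\<^sub>R X k \<omega>) /\<^sub>R W) - ereal fstar) \<le> (\<Sum>k\<le>T. ennreal (l k) * ennreal (e (X k \<omega>)))" for \<omega>
    proof -
      have "(\<Sum>k\<le>T. w k *\<^sub>R X k \<omega>) /\<^sub>R W = (\<Sum>k\<le>T. l k *\<^sub>R X k \<omega>)" by (simp add: l_def scaleR_sum_right)
      moreover have "e2ennreal (f (\<Sum>k\<le>T. l k *\<^sub>R X k \<omega>) - ereal fstar) \<le> (\<Sum>k\<le>T. ennreal (l k) * ennreal (real_of_ereal (f (X k \<omega>)) - fstar))"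
        by (rule jensen_pt[OF f_convex Q_convex Q_dom f_proper]) (use XQ e_nn l1 Wpos w_nn in \<open>auto simp: e_def l_def\<close>)
      ultimately show ?thesis by (simp add: e_def)
    qed
    have "(\<integral>\<^sup>+\<omega>. e2ennreal (f ((\<Sum>k\<le>T. w k *\<^sub>R X k \<omega>) /\<^sub>R W) - ereal fstar) \<partial>M) \<le> (\<Sum>k\<le>T. ennreal (l k) * F k)"
      unfolding intsum[symmetric] by (rule nn_integral_mono) (rule pw)
    also have "\<dots> = ennreal (inverse W) * (\<Sum>k\<le>T. ennreal (w k) * F k)"
      unfolding sum_distrib_left l_def using Wpos w_nn by (intro sum.cong refl) (simp add: ennreal_mult mult.assoc)
    also have "\<dots> \<le> ennreal (inverse W) * ennreal B" by (intro mult_left_mono SB) auto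
    also have "\<dots> = ennreal ((2 * L0\<^sup>2 * (real T + 1) + L1\<^sup>2 * (norm (x0 - xstar))\<^sup>2 / 2) / (\<mu> * W))"
    proof -
      have "inverse W * B = (2 * L0\<^sup>2 * (real T + 1) + L1\<^sup>2 * (norm (x0 - xstar))\<^sup>2 / 2) / (\<mu> * W)"
        unfolding B_def \<beta>_def beta_def D0_def using Wpos mu_pos by (simp add: field_simps)
      moreover have "ennreal (inverse W) * ennreal B = ennreal (inverse W * B)"
        by (rule ennreal_mult'[symmetric]) (use Wpos in simp)
      ultimately show ?thesis by simp
    qed
    finally show ?thesis .
  qed
  have C2: "(\<integral>\<^sup>+\<omega>. e2ennreal (f ((2 / ((real T + 1) * (real T + 2))) *\<^sub>R (\<Sum>k\<le>T. (real k + 1) *\<^sub>R X k \<omega>)) - ereal fstar) \<partial>M)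
      \<le> ennreal (4 * L0\<^sup>2 / (\<mu> * (real T + 2)) + L1\<^sup>2 * (norm (x0 - xstar))\<^sup>2 / (\<mu> * (real T + 1) * (real T + 2)))"
  proof -
    define c where "c = 2 / ((real T + 1) * (real T + 2))"
    have cp: "c > 0" by (simp add: c_def)
    define l where "l k = c * (real k + 1)" for k
    have l1: "sum l {..T} = 1" unfolding l_def sum_distrib_left[symmetric] sum_kp1 c_def by simp
    have pw: "e2ennreal (f (c *\<^sub>R (\<Sum>k\<le>T. (real k + 1) *\<^sub>R X k \<omega>)) - ereal fstar) \<le> (\<Sum>k\<le>T. ennreal (l k) * ennreal (e (X k \<omega>)))" for \<omega>
    proof -
      have "c *\<^sub>R (\<Sum>k\<le>T. (real k + 1) *\<^sub>R X k \<omega>) = (\<Sum>k\<le>T. l k *\<^sub>R X k \<omega>)" by (simp add: l_def scaleR_sum_right)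
      moreover have "e2ennreal (f (\<Sum>k\<le>T. l k *\<^sub>R X k \<omega>) - ereal fstar) \<le> (\<Sum>k\<le>T. ennreal (l k) * ennreal (real_of_ereal (f (X k \<omega>)) - fstar))"
        by (rule jensen_pt[OF f_convex Q_convex Q_dom f_proper]) (use XQ e_nn l1 cp in \<open>auto simp: e_def l_def\<close>)
      ultimately show ?thesis by (simp add: e_def)
    qed
    have "(\<integral>\<^sup>+\<omega>. e2ennreal (f (c *\<^sub>R (\<Sum>k\<le>T. (real k + 1) *\<^sub>R X k \<omega>)) - ereal fstar) \<partial>M) \<le> (\<Sum>k\<le>T. ennreal (l k) * F k)"
      unfolding intsum[symmetric] by (rule nn_integral_mono) (rule pw)
    also have "\<dots> \<le> (\<Sum>k\<le>T. ennreal c * (ennreal (w k) * F k))"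
    proof (rule sum_mono)
      fix k
      have "l k \<le> c * w k" unfolding l_def using w_ge[of k] cp by (intro mult_left_mono) auto
      then have "ennreal (l k) \<le> ennreal (c * w k)" by (rule ennreal_leI)
      also have "\<dots> = ennreal c * ennreal (w k)" by (rule ennreal_mult') (use cp in simp)
      finally have "ennreal (l k) \<le> ennreal c * ennreal (w k)" .
      then show "ennreal (l k) * F k \<le> ennreal c * (ennreal (w k) * F k)"
        by (simp add: mult.assoc[symmetric] mult_right_mono)
    qed
    also have "\<dots> = ennreal c * (\<Sum>k\<le>T. ennreal (w k) * F k)" by (simp add: sum_distrib_left)
    also have "\<dots> \<le> ennreal c * ennreal B" by (intro mult_left_mono SB) auto
    also have "\<dots> = ennreal (4 * L0\<^sup>2 / (\<mu> * (real T + 2)) + L1\<^sup>2 * (norm (x0 - xstar))\<^sup>2 / (\<mu> * (real T + 1) * (real T + 2)))"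
    proof -
      have "c * B = 4 * L0\<^sup>2 / (\<mu> * (real T + 2)) + L1\<^sup>2 * D0 / (\<mu> * (real T + 1) * (real T + 2))"
        unfolding c_def B_def \<beta>_def beta_def using alg2[of \<mu> "real T + 1" "real T + 2" L1 D0 L0] mu_pos by simp
      then have "c * B = 4 * L0\<^sup>2 / (\<mu> * (real T + 2)) + L1\<^sup>2 * (norm (x0 - xstar))\<^sup>2 / (\<mu> * (real T + 1) * (real T + 2))"
        by (simp add: D0_def)
      moreover have "ennreal c * ennreal B = ennreal (c * B)"
        by (rule ennreal_mult'[symmetric]) (use cp in simp)
      ultimately show ?thesis by simp
    qed
    finally show ?thesis unfolding c_def .
  qed
  show ?thesis using C1 C2 unfolding M_def W_def w_def X_def \<alpha>_def by (rule conjI)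
qed

end
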